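(* Let $(Z,\delta)$ be a compact metric space and for $n\ge1$ let $X_n,Y_n$ be compact subsets of $Z$ with $X_n\cup Y_n\to Z_\infty$ in the $\delta$-Hausdorff metric. Assume that $X_n\cup Y_n$ (with the induced metric) is a geodesic space for every $n$. If $Z_\infty$ is 2-connected and $\mathrm{diam}(X_n\cap Y_n)\to0$, then $\min(\mathrm{diam}(X_n),\mathrm{diam}(Y_n))\to0$.
   Context: A compact metric space $(X,d)$ is geodesic if any two points $x,y$ are joined by an isometry $p:[0,d(x,y)]\to X$ with $p(0)=x$, $p(d(x,y))=y$. A metric space $X$ is 2-connected if $X\setminus\{x_0\}$ is connected for every $x_0\in X$. *)

theory Defs
  imports "HOL-Analysis.Analysis"
begin

definition hausdorff_distance :: "'a::metric_space set \<Rightarrow> 'a set \<Rightarrow> real" where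
  "hausdorff_distance S T =
     max (SUP x\<in>S. infdist x T) (SUP y\<in>T. infdist y S)"

definition geodesic_space :: "'a::metric_space set \<Rightarrow> bool" where
  "geodesic_space S \<longleftrightarrow>
     (\<forall>x\<in>S. \<forall>y\<in>S. \<exists>p::real \<Rightarrow> 'a.
        p ` {0..dist x y} \<subseteq> S \<and> p 0 = x \<and> p (dist x y) = y \<and>
        (\<forall>s\<in>{0..dist x y}. \<forall>t\<in>{0..dist x y}. dist (p s) (p t) = \<bar>s - t\<bar>))"

definition two_connected :: "'a::topological_space set \<Rightarrow> bool" where
  "two_connected S \<longleftrightarrow> (\<forall>x\<in>S. connected (S - {x}))"

end

theory Submission
  imports Defs "HOL-Complex_Analysis.Great_Picard"
begin


lemma compact_countable_dense:
  fixes S :: "'a::metric_space set" assumes "compact S"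
  obtains D where "countable D" "D \<subseteq> S" "\<And>u e. u \<in> S \<Longrightarrow> e > 0 \<Longrightarrow> \<exists>d\<in>D. dist u d < e"
proof -
  from seq_compact_imp_totally_bounded[OF compact_imp_seq_compact[OF assms]]
  have "\<forall>n::nat. \<exists>k. finite k \<and> k \<subseteq> S \<and> S \<subseteq> (\<Union>x\<in>k. ball x (inverse (real (Suc n))))"
    by simp
  then obtain k where k: "\<And>n. finite (k n) \<and> k n \<subseteq> S \<and> S \<subseteq> (\<Union>x\<in>k n. ball x (inverse (real (Suc n))))"
    by metis
  show ?thesis
  proof (rule that[of "\<Union>n. k n"])
    show "countable (\<Union>n. k n)" using k by (simp add: countable_finite)
    show "(\<Union>n. k n) \<subseteq> S" using k by auto
    fix u and e :: real assume u: "u \<in> S" and e: "e > 0"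
    then obtain n where n: "inverse (real (Suc n)) < e" using reals_Archimedean by blast
    from k[of n] u obtain d where "d \<in> k n" "dist d u < inverse (real (Suc n))" by auto
    then show "\<exists>d\<in>\<Union>n. k n. dist u d < e" using n by (metis UN_I UNIV_I dist_commute less_trans)
  qed
qed

lemma geodesic_cross:
  fixes X Y :: "'a::metric_space set"
  assumes "geodesic_space (X \<union> Y)" "closed X" "closed Y" "a \<in> X" "b \<in> Y"
  shows "\<exists>c\<in>X \<inter> Y. dist a c \<le> dist a b"
proof -
  let ?L = "dist a b"
  obtain p where p: "p ` {0..?L} \<subseteq> X \<union> Y" "p 0 = a" "p ?L = b"
     "\<forall>s\<in>{0..?L}. \<forall>t\<in>{0..?L}. dist (p s) (p t) = \<bar>s - t\<bar>"
    using assms(1,4,5) unfolding geodesic_space_def by blast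
  have cont: "continuous_on {0..?L} p"
    unfolding continuous_on_iff
  proof (intro ballI allI impI)
    fix x and e :: real assume "x \<in> {0..?L}" "e > 0"
    then show "\<exists>d>0. \<forall>x'\<in>{0..?L}. dist x' x < d \<longrightarrow> dist (p x') (p x) < e"
      using p(4) by (intro exI[of _ e]) (auto simp: dist_real_def)
  qed
  define P where "P = {0..?L} \<inter> p -` X"
  define Q where "Q = {0..?L} \<inter> p -` Y"
  have cP: "closed P" unfolding P_def by (rule continuous_closed_preimage[OF cont closed_atLeastAtMost assms(2)])
  have cQ: "closed Q" unfolding Q_def by (rule continuous_closed_preimage[OF cont closed_atLeastAtMost assms(3)])
  have "connected {0..?L}" by simp
  moreover have "{0..?L} \<subseteq> P \<union> Q" using p(1) unfolding P_def Q_def by auto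
  moreover have "0 \<in> P \<inter> {0..?L}" using p(2) assms(4) unfolding P_def by auto
  moreover have "?L \<in> Q \<inter> {0..?L}" using p(3) assms(5) unfolding Q_def by auto
  ultimately have "P \<inter> Q \<inter> {0..?L} \<noteq> {}" using cP cQ unfolding connected_closed by blast
  then obtain t where t: "t \<in> {0..?L}" "p t \<in> X" "p t \<in> Y" unfolding P_def Q_def by blast
  have "dist a (p t) = t" using p(2,4) t(1) by force
  then show ?thesis using t by (intro bexI[of _ "p t"]) auto
qed

lemma infdist_attained:
  fixes A :: "'a::metric_space set"
  assumes "compact A" "A \<noteq> {}"
  shows "\<exists>a\<in>A. infdist x A = dist x a"
proof -
  have "continuous_on A (dist x)" by (intro continuous_intros)
  from continuous_attains_inf[OF assms this] obtain a where a: "a \<in> A" "\<forall>y\<in>A. dist x a \<le> dist x y" by blast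
  have "infdist x A = dist x a"
    using a assms(2) by (intro antisym infdist_le) (auto simp: infdist_notempty intro!: cINF_greatest)
  then show ?thesis using a by blast
qed

lemma two_conn_contra:
  assumes "two_connected S" "closed A" "closed B" "S \<subseteq> A \<union> B" "A \<subseteq> S" "B \<subseteq> S"
    "\<forall>u\<in>A \<inter> B. \<forall>v\<in>A \<inter> B. u = v" "a1 \<in> A" "a2 \<in> A" "a1 \<noteq> a2" "b1 \<in> B" "b2 \<in> B" "b1 \<noteq> b2"
  shows False
proof -
  obtain p where p: "p \<in> S" "A \<inter> B \<subseteq> {p}"
  proof (cases "A \<inter> B = {}")
    case True then show ?thesis using that[of a1] assms by auto
  next
    case False then obtain q where "q \<in> A \<inter> B" by auto
    then have "A \<inter> B \<subseteq> {q}" using assms(7) by blast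
    then show ?thesis using that[of q] assms \<open>q \<in> A \<inter> B\<close> by blast
  qed
  have "connected (S - {p})" using assms(1) p unfolding two_connected_def by blast
  moreover have "A \<inter> (S - {p}) \<noteq> {}"
  proof -
    have "a1 \<noteq> p \<or> a2 \<noteq> p" using assms(10) by blast
    then show ?thesis using assms(5,8,9) by blast
  qed
  moreover have "B \<inter> (S - {p}) \<noteq> {}"
  proof -
    have "b1 \<noteq> p \<or> b2 \<noteq> p" using assms(13) by blast
    then show ?thesis using assms(6,11,12) by blast
  qed
  moreover have "S - {p} \<subseteq> A \<union> B" "A \<inter> B \<inter> (S - {p}) = {}" using assms p by auto
  ultimately show False using assms(2,3) unfolding connected_closed by blast
qed

lemma haus_bounds:
  fixes S T :: "'a::metric_space set"
  assumes "compact S" "compact T" "S \<noteq> {}" "T \<noteq> {}"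
  shows "u \<in> T \<Longrightarrow> infdist u S \<le> hausdorff_distance S T"
    and "v \<in> S \<Longrightarrow> infdist v T \<le> hausdorff_distance S T"
proof -
  have b1: "bdd_above ((\<lambda>y. infdist y S) ` T)"
    by (intro bounded_imp_bdd_above compact_imp_bounded compact_continuous_image assms continuous_intros)
  have b2: "bdd_above ((\<lambda>y. infdist y T) ` S)"
    by (intro bounded_imp_bdd_above compact_imp_bounded compact_continuous_image assms continuous_intros)
  show "u \<in> T \<Longrightarrow> infdist u S \<le> hausdorff_distance S T"
    unfolding hausdorff_distance_def using cSUP_upper[OF _ b1] by (metis max.coboundedI2)
  show "v \<in> S \<Longrightarrow> infdist v T \<le> hausdorff_distance S T"
    unfolding hausdorff_distance_def using cSUP_upper[OF _ b2] by (metis max.coboundedI1)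
qed

lemma dense_convergent:
  assumes "\<And>d. d \<in> D \<Longrightarrow> convergent (\<lambda>n. infdist d (S n))"
    "\<And>u e. u \<in> T \<Longrightarrow> e > 0 \<Longrightarrow> \<exists>d\<in>D. dist u d < e" "u \<in> T"
  shows "convergent (\<lambda>n. infdist u (S n))"
  unfolding Cauchy_convergent_iff[symmetric] Cauchy_def
proof (intro allI impI)
  fix e :: real assume e: "e > 0"
  then obtain d where d: "d \<in> D" "dist u d < e/3" using assms(2)[OF assms(3), of "e/3"] by auto
  have "Cauchy (\<lambda>n. infdist d (S n))" using assms(1)[OF d(1)] by (simp add: Cauchy_convergent_iff)
  then obtain M where M: "\<forall>m\<ge>M. \<forall>n\<ge>M. dist (infdist d (S m)) (infdist d (S n)) < e/3"
    unfolding Cauchy_def using e by (meson divide_pos_pos zero_less_numeral)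
  show "\<exists>M. \<forall>m\<ge>M. \<forall>n\<ge>M. dist (infdist u (S m)) (infdist u (S n)) < e"
  proof (intro exI allI impI)
    fix m n assume "m \<ge> M" "n \<ge> M"
    then have "\<bar>infdist d (S m) - infdist d (S n)\<bar> < e/3" using M by (auto simp: dist_real_def)
    moreover have "\<bar>infdist u (S m) - infdist d (S m)\<bar> \<le> dist u d" by (rule infdist_triangle_abs)
    moreover have "\<bar>infdist u (S n) - infdist d (S n)\<bar> \<le> dist u d" by (rule infdist_triangle_abs)
    ultimately show "dist (infdist u (S m)) (infdist u (S n)) < e" using d(2) unfolding dist_real_def abs_less_iff abs_le_iff by linarith
  qed
qed



lemma limit_zero:
  assumes "(\<lambda>n. infdist t (S n)) \<longlonglongrightarrow> L" "\<And>n. s n \<in> S n" "s \<longlonglongrightarrow> t"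
  shows "L = 0"
proof -
  have d: "(\<lambda>n. dist t (s n)) \<longlonglongrightarrow> 0"
    using tendsto_dist[OF tendsto_const assms(3), of t] by simp
  have "L \<le> 0"
    by (rule LIMSEQ_le[OF assms(1) d]) (auto intro: infdist_le assms(2))
  moreover have "0 \<le> L"
    by (rule LIMSEQ_le_const[OF assms(1)]) (auto intro: infdist_nonneg)
  ultimately show ?thesis by simp
qed

lemma dist_limit_ge:
  assumes "\<And>n. e \<le> dist (x n) (x' n)" "x \<longlonglongrightarrow> z" "x' \<longlonglongrightarrow> z'"
  shows "e \<le> dist z z'"
  by (rule LIMSEQ_le_const[OF tendsto_dist[OF assms(2,3)]]) (use assms(1) in auto)

lemma lim_lipschitz:
  assumes "(\<lambda>n. infdist u (S n)) \<longlonglongrightarrow> a" "(\<lambda>n. infdist v (S n)) \<longlonglongrightarrow> b"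
  shows "\<bar>a - b\<bar> \<le> dist u v"
  by (rule Lim_bounded[OF tendsto_rabs[OF tendsto_diff[OF assms]], of 0]) (auto intro: infdist_triangle_abs)

lemma cross_seq:
  fixes X Y :: "nat \<Rightarrow> 'a::metric_space set"
  assumes "\<And>n. compact (X n)" "\<And>n. compact (Y n)" "\<And>n. X n \<noteq> {}" "\<And>n. Y n \<noteq> {}"
    "\<And>n. geodesic_space (X n \<union> Y n)"
    "(\<lambda>n. infdist p (X n)) \<longlonglongrightarrow> 0" "(\<lambda>n. infdist p (Y n)) \<longlonglongrightarrow> 0"
  obtains c where "\<And>n. c n \<in> X n \<inter> Y n" "c \<longlonglongrightarrow> p"
proof -
  have "\<exists>c\<in>X n \<inter> Y n. dist p c \<le> 2 * infdist p (X n) + infdist p (Y n)" for n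
  proof -
    obtain a where a: "a \<in> X n" "infdist p (X n) = dist p a" using infdist_attained[OF assms(1)[of n] assms(3)[of n], of p] by blast
    obtain b where b: "b \<in> Y n" "infdist p (Y n) = dist p b" using infdist_attained[OF assms(2)[of n] assms(4)[of n], of p] by blast
    obtain c where c: "c \<in> X n \<inter> Y n" "dist a c \<le> dist a b"
      using geodesic_cross[OF assms(5) compact_imp_closed[OF assms(1)] compact_imp_closed[OF assms(2)] a(1) b(1)]
      by blast
    have "dist p c \<le> dist p a + dist a c" by (rule dist_triangle)
    moreover have "dist a b \<le> dist p a + dist p b" by (metis dist_commute dist_triangle)
    ultimately show ?thesis using a b c by (intro bexI[of _ c]) auto
  qed
  then have "\<forall>n. \<exists>c. c \<in> X n \<inter> Y n \<and> dist p c \<le> 2 * infdist p (X n) + infdist p (Y n)" by blast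
  from choice[OF this] obtain c where c0: "\<forall>n. c n \<in> X n \<inter> Y n \<and> dist p (c n) \<le> 2 * infdist p (X n) + infdist p (Y n)" by blast
  then have c: "\<And>n. c n \<in> X n \<inter> Y n" "\<And>n. dist p (c n) \<le> 2 * infdist p (X n) + infdist p (Y n)" by auto
  have u: "(\<lambda>n. 2 * infdist p (X n) + infdist p (Y n)) \<longlonglongrightarrow> 0"
    using tendsto_add[OF tendsto_mult[OF tendsto_const assms(6)] assms(7), of 2] by simp
  have "(\<lambda>n. dist (c n) p) \<longlonglongrightarrow> 0"
    by (rule tendsto_sandwich[OF _ _ tendsto_const u]) (auto simp: dist_commute c(2))
  then show ?thesis using that c(1) tendsto_dist_iff by blast
qed


lemma final:
  fixes Zinf :: "'a::metric_space set" and X Y :: "nat \<Rightarrow> 'a set"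
  assumes cX: "\<And>n. compact (X n)" and cY: "\<And>n. compact (Y n)"
    and neX: "\<And>n. X n \<noteq> {}" and neY: "\<And>n. Y n \<noteq> {}"
    and cZ: "compact Zinf" and neZ: "Zinf \<noteq> {}"
    and h: "(\<lambda>n. hausdorff_distance (X n \<union> Y n) Zinf) \<longlonglongrightarrow> 0"
    and geo: "\<And>n. geodesic_space (X n \<union> Y n)"
    and tc: "two_connected Zinf"
    and di: "(\<lambda>n. diameter (X n \<inter> Y n)) \<longlonglongrightarrow> 0"
    and convX: "\<And>u. u \<in> Zinf \<Longrightarrow> convergent (\<lambda>n. infdist u (X n))"
    and convY: "\<And>u. u \<in> Zinf \<Longrightarrow> convergent (\<lambda>n. infdist u (Y n))"
    and eps: "\<epsilon> > 0"
    and x: "\<And>n. x n \<in> X n" "\<And>n. x' n \<in> X n" "\<And>n. \<epsilon> \<le> dist (x n) (x' n)" "x \<longlonglongrightarrow> z" "x' \<longlonglongrightarrow> z'"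
    and y: "\<And>n. y n \<in> Y n" "\<And>n. y' n \<in> Y n" "\<And>n. \<epsilon> \<le> dist (y n) (y' n)" "y \<longlonglongrightarrow> w" "y' \<longlonglongrightarrow> w'"
  shows False
proof -
  define h where "h n = hausdorff_distance (X n \<union> Y n) Zinf" for n
  have cU: "compact (X n \<union> Y n)" for n using cX cY by blast
  have neU: "X n \<union> Y n \<noteq> {}" for n using neX by blast
  have hZ: "infdist u (X n \<union> Y n) \<le> h n" if "u \<in> Zinf" for u n
    unfolding h_def by (rule haus_bounds(1)[OF cU cZ neU neZ that])
  have hU: "infdist v Zinf \<le> h n" if "v \<in> X n \<union> Y n" for v n
    unfolding h_def by (rule haus_bounds(2)[OF cU cZ neU neZ that])
  have h0: "h \<longlonglongrightarrow> 0" using h unfolding h_def .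
  have clZ: "closed Zinf" using cZ by (rule compact_imp_closed)
  have inZ: "t \<in> Zinf" if s: "\<And>n. s n \<in> X n \<union> Y n" "s \<longlonglongrightarrow> t" for s t
  proof -
    have b: "infdist t Zinf \<le> h n + dist (s n) t" for n
      using infdist_triangle[of t Zinf "s n"] hU[OF s(1)[of n]] by (simp add: dist_commute)
    have "(\<lambda>n. h n + dist (s n) t) \<longlonglongrightarrow> 0"
      using tendsto_add[OF h0 tendsto_dist[OF s(2) tendsto_const[of t]]] by simp
    then have "infdist t Zinf \<le> 0"
      by (rule LIMSEQ_le[OF tendsto_const]) (use b in auto)
    then have "infdist t Zinf = 0" using infdist_nonneg by (metis antisym)
    then show ?thesis using in_closed_iff_infdist_zero[OF clZ neZ] by blast
  qed
  define F where "F u = lim (\<lambda>n. infdist u (X n))" for u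
  define G where "G u = lim (\<lambda>n. infdist u (Y n))" for u
  have FX: "(\<lambda>n. infdist u (X n)) \<longlonglongrightarrow> F u" if "u \<in> Zinf" for u
    unfolding F_def using convX[OF that] by (simp add: convergent_LIMSEQ_iff)
  have GY: "(\<lambda>n. infdist u (Y n)) \<longlonglongrightarrow> G u" if "u \<in> Zinf" for u
    unfolding G_def using convY[OF that] by (simp add: convergent_LIMSEQ_iff)
  have contF: "continuous_on Zinf F"
    unfolding continuous_on_iff
  proof (intro ballI allI impI)
    fix u and e :: real assume "u \<in> Zinf" "e > 0"
    then show "\<exists>d>0. \<forall>v\<in>Zinf. dist v u < d \<longrightarrow> dist (F v) (F u) < e"
    proof (intro exI[of _ e] conjI ballI impI)
      fix v assume v: "v \<in> Zinf" "dist v u < e"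
      have "\<bar>F v - F u\<bar> \<le> dist v u" using lim_lipschitz[OF FX[OF v(1)] FX[OF \<open>u \<in> Zinf\<close>]] .
      then show "dist (F v) (F u) < e" using v(2) by (simp add: dist_real_def)
    qed simp
  qed
  have contG: "continuous_on Zinf G"
    unfolding continuous_on_iff
  proof (intro ballI allI impI)
    fix u and e :: real assume "u \<in> Zinf" "e > 0"
    then show "\<exists>d>0. \<forall>v\<in>Zinf. dist v u < d \<longrightarrow> dist (G v) (G u) < e"
    proof (intro exI[of _ e] conjI ballI impI)
      fix v assume v: "v \<in> Zinf" "dist v u < e"
      have "\<bar>G v - G u\<bar> \<le> dist v u" using lim_lipschitz[OF GY[OF v(1)] GY[OF \<open>u \<in> Zinf\<close>]] .
      then show "dist (G v) (G u) < e" using v(2) by (simp add: dist_real_def)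
    qed simp
  qed
  define A where "A = {u \<in> Zinf. F u = 0}"
  define B where "B = {u \<in> Zinf. G u = 0}"
  have clA: "closed A" unfolding A_def by (rule continuous_closed_preimage_constant[OF contF clZ])
  have clB: "closed B" unfolding B_def by (rule continuous_closed_preimage_constant[OF contG clZ])
  have cover: "Zinf \<subseteq> A \<union> B"
  proof
    fix u assume u: "u \<in> Zinf"
    have m: "(\<lambda>n. min (infdist u (X n)) (infdist u (Y n))) \<longlonglongrightarrow> min (F u) (G u)"
      by (rule tendsto_min[OF FX[OF u] GY[OF u]])
    have "min (F u) (G u) \<le> 0"
      by (rule LIMSEQ_le[OF m h0]) (use hZ[OF u] infdist_Un_min[OF neX neY] in auto)
    moreover have "0 \<le> F u" by (rule LIMSEQ_le_const[OF FX[OF u]]) (auto intro: infdist_nonneg)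
    moreover have "0 \<le> G u" by (rule LIMSEQ_le_const[OF GY[OF u]]) (auto intro: infdist_nonneg)
    ultimately show "u \<in> A \<union> B" using u unfolding A_def B_def by (auto simp: min_def split: if_splits)
  qed
  have near: "\<exists>c. (\<forall>n. c n \<in> X n \<inter> Y n) \<and> c \<longlonglongrightarrow> p" if "p \<in> A \<inter> B" for p
  proof -
    have p: "p \<in> Zinf" "F p = 0" "G p = 0" using that unfolding A_def B_def by auto
    obtain c where "\<And>n. c n \<in> X n \<inter> Y n" "c \<longlonglongrightarrow> p"
    proof -
      have l1: "(\<lambda>n. infdist p (X n)) \<longlonglongrightarrow> 0" using FX[OF p(1)] p(2) by simp
      have l2: "(\<lambda>n. infdist p (Y n)) \<longlonglongrightarrow> 0" using GY[OF p(1)] p(3) by simp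
      show ?thesis using cross_seq[of X Y p, OF cX cY neX neY geo l1 l2] that by blast
    qed
    then show ?thesis by blast
  qed
  have uniq: "\<forall>p\<in>A \<inter> B. \<forall>q\<in>A \<inter> B. p = q"
  proof (intro ballI)
    fix p q assume "p \<in> A \<inter> B" "q \<in> A \<inter> B"
    then obtain c c' where c: "\<And>n. c n \<in> X n \<inter> Y n" "c \<longlonglongrightarrow> p"
      and c': "\<And>n. c' n \<in> X n \<inter> Y n" "c' \<longlonglongrightarrow> q" using near by metis
    have "dist (c n) (c' n) \<le> diameter (X n \<inter> Y n)" for n
      by (rule diameter_bounded_bound[OF compact_imp_bounded[OF compact_Int[OF cX cY]] c(1) c'(1)])
    then have "dist p q \<le> 0"
      by (intro LIMSEQ_le[OF tendsto_dist[OF c(2) c'(2)] di]) auto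
    then show "p = q" by simp
  qed
  have zZ: "z \<in> Zinf" by (rule inZ[of x z]) (use x in auto)
  have zZ': "z' \<in> Zinf" by (rule inZ[of x' z']) (use x in auto)
  have wZ: "w \<in> Zinf" by (rule inZ[of y w]) (use y in auto)
  have wZ': "w' \<in> Zinf" by (rule inZ[of y' w']) (use y in auto)
  have zA: "z \<in> A" "z' \<in> A"
    using limit_zero[OF FX[OF zZ] x(1) x(4)] limit_zero[OF FX[OF zZ'] x(2) x(5)] zZ zZ'
    unfolding A_def by auto
  have wB: "w \<in> B" "w' \<in> B"
    using limit_zero[OF GY[OF wZ] y(1) y(4)] limit_zero[OF GY[OF wZ'] y(2) y(5)] wZ wZ'
    unfolding B_def by auto
  have zz: "z \<noteq> z'" using dist_limit_ge[OF x(3,4,5)] eps by auto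
  have ww: "w \<noteq> w'" using dist_limit_ge[OF y(3,4,5)] eps by auto
  have AZ: "A \<subseteq> Zinf" and BZ: "B \<subseteq> Zinf" unfolding A_def B_def by auto
  show False
    by (rule two_conn_contra[OF tc clA clB cover AZ BZ uniq zA(1) zA(2) zz wB(1) wB(2) ww])
qed



lemma subseq_lim: "f \<longlonglongrightarrow> l \<Longrightarrow> strict_mono r \<Longrightarrow> (\<lambda>n. f (r n)) \<longlonglongrightarrow> l"
  using LIMSEQ_subseq_LIMSEQ[of f l r] unfolding o_def by blast

theorem lemma5p5:
  fixes Z Zinf :: "'a::metric_space set"
    and X Y :: "nat \<Rightarrow> 'a set"
  assumes "compact Z"
    and "\<And>n. compact (X n)" and "\<And>n. X n \<subseteq> Z"
    and "\<And>n. compact (Y n)" and "\<And>n. Y n \<subseteq> Z"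
    and "\<And>n. X n \<union> Y n \<noteq> {}"
    and "compact Zinf" and "Zinf \<subseteq> Z" and "Zinf \<noteq> {}"
    and "(\<lambda>n. hausdorff_distance (X n \<union> Y n) Zinf) \<longlonglongrightarrow> 0"
    and "\<And>n. geodesic_space (X n \<union> Y n)"
    and "two_connected Zinf"
    and "(\<lambda>n. diameter (X n \<inter> Y n)) \<longlonglongrightarrow> 0"
  shows "(\<lambda>n. min (diameter (X n)) (diameter (Y n))) \<longlonglongrightarrow> 0"
proof (rule ccontr)
  let ?m = "\<lambda>n. min (diameter (X n)) (diameter (Y n))"
  assume nt: "\<not> ?m \<longlonglongrightarrow> 0"
  have bZ: "bounded Z" using assms(1) by (rule compact_imp_bounded)
  have m0: "0 \<le> ?m n" for n
    using diameter_ge_0[OF compact_imp_bounded[OF assms(2)[of n]]]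
      diameter_ge_0[OF compact_imp_bounded[OF assms(4)[of n]]] by simp
  from nt obtain \<epsilon> :: real where eps: "\<epsilon> > 0" "\<forall>N. \<exists>n\<ge>N. \<not> dist (?m n) 0 < \<epsilon>"
    unfolding LIMSEQ_def by blast
  define S where "S = {n. \<epsilon> \<le> diameter (X n) \<and> \<epsilon> \<le> diameter (Y n)}"
  have "\<forall>N. \<exists>n\<ge>N. n \<in> S"
  proof
    fix N
    from eps(2) obtain n where n: "n \<ge> N" "\<not> dist (?m n) 0 < \<epsilon>" by blast
    have "n \<in> S" using n(2) m0[of n] unfolding S_def by (auto simp: dist_real_def min_def split: if_splits)
    then show "\<exists>n\<ge>N. n \<in> S" using n(1) by blast
  qed
  then have "infinite S" by (rule iffD2[OF infinite_nat_iff_unbounded_le])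
  from infinite_enumerate[OF this] obtain r0 :: "nat \<Rightarrow> nat" where r0: "strict_mono r0" "\<forall>n. r0 n \<in> S"
    by blast
  have dX: "\<epsilon> \<le> diameter (X (r0 n))" and dY: "\<epsilon> \<le> diameter (Y (r0 n))" for n
    using r0(2) unfolding S_def by auto
  have neX: "X (r0 n) \<noteq> {}" and neY: "Y (r0 n) \<noteq> {}" for n
    using dX[of n] dY[of n] eps(1) by auto
  have "\<exists>q. fst (fst q) \<in> X (r0 n) \<and> snd (fst q) \<in> X (r0 n) \<and> \<epsilon> \<le> dist (fst (fst q)) (snd (fst q))
        \<and> fst (snd q) \<in> Y (r0 n) \<and> snd (snd q) \<in> Y (r0 n) \<and> \<epsilon> \<le> dist (fst (snd q)) (snd (snd q))" for n
  proof -
    obtain a b where ab: "a \<in> X (r0 n)" "b \<in> X (r0 n)" "dist a b = diameter (X (r0 n))"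
      using diameter_compact_attained[OF assms(2) neX[of n]] by blast
    obtain c d where cd: "c \<in> Y (r0 n)" "d \<in> Y (r0 n)" "dist c d = diameter (Y (r0 n))"
      using diameter_compact_attained[OF assms(4) neY[of n]] by blast
    show ?thesis using ab cd dX[of n] dY[of n] by (intro exI[of _ "((a,b),(c,d))"]) auto
  qed
  then have "\<forall>n. \<exists>q. fst (fst q) \<in> X (r0 n) \<and> snd (fst q) \<in> X (r0 n) \<and> \<epsilon> \<le> dist (fst (fst q)) (snd (fst q))
        \<and> fst (snd q) \<in> Y (r0 n) \<and> snd (snd q) \<in> Y (r0 n) \<and> \<epsilon> \<le> dist (fst (snd q)) (snd (snd q))" by blast
  from choice[OF this] obtain q where q: "\<forall>n. fst (fst (q n)) \<in> X (r0 n) \<and> snd (fst (q n)) \<in> X (r0 n) \<and> \<epsilon> \<le> dist (fst (fst (q n))) (snd (fst (q n)))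
        \<and> fst (snd (q n)) \<in> Y (r0 n) \<and> snd (snd (q n)) \<in> Y (r0 n) \<and> \<epsilon> \<le> dist (fst (snd (q n))) (snd (snd (q n)))" by blast
  have qZ: "q n \<in> (Z \<times> Z) \<times> (Z \<times> Z)" for n
    using q[rule_format, of n] assms(3)[of "r0 n"] assms(5)[of "r0 n"] by (auto simp: mem_Times_iff)
  have "seq_compact ((Z \<times> Z) \<times> (Z \<times> Z))"
    by (intro compact_imp_seq_compact compact_Times assms(1))
  then obtain l and r1 :: "nat \<Rightarrow> nat" where r1: "strict_mono r1" "(q \<circ> r1) \<longlonglongrightarrow> l"
    unfolding seq_compact_def using qZ by blast
  obtain z z' w w' where l: "l = ((z, z'), (w, w'))" by (metis prod.collapse)
  have qr1: "(\<lambda>n. q (r1 n)) \<longlonglongrightarrow> ((z, z'), (w, w'))" using r1(2) l by (simp add: o_def)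
  have cx: "(\<lambda>n. fst (fst (q (r1 n)))) \<longlonglongrightarrow> z" using tendsto_fst[OF tendsto_fst[OF qr1]] by simp
  have cx': "(\<lambda>n. snd (fst (q (r1 n)))) \<longlonglongrightarrow> z'" using tendsto_snd[OF tendsto_fst[OF qr1]] by simp
  have cy: "(\<lambda>n. fst (snd (q (r1 n)))) \<longlonglongrightarrow> w" using tendsto_fst[OF tendsto_snd[OF qr1]] by simp
  have cy': "(\<lambda>n. snd (snd (q (r1 n)))) \<longlonglongrightarrow> w'" using tendsto_snd[OF tendsto_snd[OF qr1]] by simp
  obtain D where D: "countable D" "D \<subseteq> Zinf" "\<And>u e. u \<in> Zinf \<Longrightarrow> e > 0 \<Longrightarrow> \<exists>d\<in>D. dist u d < e"
    using compact_countable_dense[OF assms(7)] by blast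
  have bndX: "norm (infdist d (X (r0 k))) \<le> diameter Z" if "d \<in> D" for d k
  proof -
    have "infdist d (X (r0 k)) \<le> dist d (fst (fst (q k)))" using q by (auto intro: infdist_le)
    also have "\<dots> \<le> diameter Z"
      proof (rule diameter_bounded_bound[OF bZ])
      show "d \<in> Z" using D(2) assms(8) that by blast
      show "fst (fst (q k)) \<in> Z" using q assms(3)[of "r0 k"] by blast
    qed
    finally show ?thesis by (simp add: infdist_nonneg)
  qed
  have bndY: "norm (infdist d (Y (r0 k))) \<le> diameter Z" if "d \<in> D" for d k
  proof -
    have "infdist d (Y (r0 k)) \<le> dist d (fst (snd (q k)))" using q by (auto intro: infdist_le)
    also have "\<dots> \<le> diameter Z"
      proof (rule diameter_bounded_bound[OF bZ])
      show "d \<in> Z" using D(2) assms(8) that by blast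
      show "fst (snd (q k)) \<in> Z" using q assms(5)[of "r0 k"] by blast
    qed
    finally show ?thesis by (simp add: infdist_nonneg)
  qed
  obtain r2 :: "nat \<Rightarrow> nat" where r2: "strict_mono r2" "\<And>d. d \<in> D \<Longrightarrow> \<exists>l. (\<lambda>n. infdist d (X (r0 (r1 (r2 n))))) \<longlonglongrightarrow> l"
    using function_convergent_subsequence[OF D(1), of "\<lambda>n d. infdist d (X (r0 (r1 n)))" "diameter Z"] bndX
    by blast
  obtain r3 :: "nat \<Rightarrow> nat" where r3: "strict_mono r3" "\<And>d. d \<in> D \<Longrightarrow> \<exists>l. (\<lambda>n. infdist d (Y (r0 (r1 (r2 (r3 n)))))) \<longlonglongrightarrow> l"
    using function_convergent_subsequence[OF D(1), of "\<lambda>n d. infdist d (Y (r0 (r1 (r2 n))))" "diameter Z"] bndY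
    by blast
  define R where "R n = r0 (r1 (r2 (r3 n)))" for n
  define s where "s n = r2 (r3 n)" for n
  have sR: "strict_mono R" unfolding R_def using r0(1) r1(1) r2(1) r3(1)
    by (simp add: strict_mono_def)
  have ss: "strict_mono s" unfolding s_def using r2(1) r3(1) by (simp add: strict_mono_def)
  show False
  proof (rule final[of "\<lambda>n. X (R n)" "\<lambda>n. Y (R n)" Zinf])
    show "\<And>n. compact (X (R n))" "\<And>n. compact (Y (R n))" using assms(2,4) by auto
    show "\<And>n. X (R n) \<noteq> {}" "\<And>n. Y (R n) \<noteq> {}" using neX neY unfolding R_def by auto
    show "compact Zinf" "Zinf \<noteq> {}" by fact+
    show "(\<lambda>n. hausdorff_distance (X (R n) \<union> Y (R n)) Zinf) \<longlonglongrightarrow> 0"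
      by (rule subseq_lim[OF assms(10) sR])
    show "\<And>n. geodesic_space (X (R n) \<union> Y (R n))" using assms(11) by auto
    show "two_connected Zinf" by fact
    show "(\<lambda>n. diameter (X (R n) \<inter> Y (R n))) \<longlonglongrightarrow> 0"
      by (rule subseq_lim[OF assms(13) sR])
    show "\<And>u. u \<in> Zinf \<Longrightarrow> convergent (\<lambda>n. infdist u (X (R n)))"
    proof (rule dense_convergent[OF _ D(3)])
      fix d assume "d \<in> D"
      then obtain l where "(\<lambda>n. infdist d (X (r0 (r1 (r2 n))))) \<longlonglongrightarrow> l" using r2(2) by blast
      from subseq_lim[OF this r3(1)] show "convergent (\<lambda>n. infdist d (X (R n)))"
        unfolding R_def convergent_def by blast
    qed
    show "\<And>u. u \<in> Zinf \<Longrightarrow> convergent (\<lambda>n. infdist u (Y (R n)))"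
    proof (rule dense_convergent[OF _ D(3)])
      fix d assume "d \<in> D"
      then show "convergent (\<lambda>n. infdist d (Y (R n)))"
        using r3(2) unfolding R_def convergent_def by blast
    qed
    show "\<epsilon> > 0" by fact
    show "\<And>n. fst (fst (q (r1 (s n)))) \<in> X (R n)" "\<And>n. snd (fst (q (r1 (s n)))) \<in> X (R n)"
      "\<And>n. \<epsilon> \<le> dist (fst (fst (q (r1 (s n))))) (snd (fst (q (r1 (s n)))))"
      using q unfolding R_def s_def by auto
    show "\<And>n. fst (snd (q (r1 (s n)))) \<in> Y (R n)" "\<And>n. snd (snd (q (r1 (s n)))) \<in> Y (R n)"
      "\<And>n. \<epsilon> \<le> dist (fst (snd (q (r1 (s n))))) (snd (snd (q (r1 (s n)))))"
      using q unfolding R_def s_def by auto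
    show "(\<lambda>n. fst (fst (q (r1 (s n))))) \<longlonglongrightarrow> z" by (rule subseq_lim[OF cx ss])
    show "(\<lambda>n. snd (fst (q (r1 (s n))))) \<longlonglongrightarrow> z'" by (rule subseq_lim[OF cx' ss])
    show "(\<lambda>n. fst (snd (q (r1 (s n))))) \<longlonglongrightarrow> w" by (rule subseq_lim[OF cy ss])
    show "(\<lambda>n. snd (snd (q (r1 (s n))))) \<longlonglongrightarrow> w'" by (rule subseq_lim[OF cy' ss])
  qed
qed

end
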